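(* Let $\delta,D\ge0$ and let $(X_n,x_n,\Gamma_n)\in\mathcal{M}(\delta,D)$ converge in the equivariant pointed Gromov–Hausdorff sense to $(X_\infty,x_\infty,\Gamma_\infty)$, with $X_\infty$ proper and $\Gamma_\infty$ closed in $\mathrm{Isom}(X_\infty)$. Let $Y_n=\mathrm{QC\text{-}Hull}(\Lambda(\Gamma_n))$. Then for every $0<r\le R$, $\sup_{n\in\mathbb N}\mathrm{Pack}_{Y_n}(R,r)<+\infty$.
   Context: For $Z$ a subset of a metric space, $\mathrm{Pack}(Z,r)$ is the maximal cardinality of a $2r$-separated subset of $Z$; for $Y\subseteq X$, $\mathrm{Pack}_Y(R,r)=\sup_{y\in Y}\mathrm{Pack}(\overline B(y,R)\cap Y,r)$. Gromov product $(y,z)_x=\frac12(d(x,y)+d(x,z)-d(y,z))$; $X$ is $\delta$-hyperbolic if $(x,z)_w\geq\min\{(x,y)_w,(y,z)_w\}-\delta$ for all points. $\Lambda(\Gamma)$: accumulation points in the Gromov boundary of $\Gamma x$; elementary means $\#\Lambda(\Gamma)\le2$. $\mathrm{QC\text{-}Hull}(C)$: union of geodesic lines with both endpoints in $C$. Quasiconvex-cocompact with codiameter $\le D$: for all $y,y'\in\mathrm{QC\text{-}Hull}(\Lambda(\Gamma))$ there is $g\in\Gamma$ with $d(gy,y')\le D$. $\mathcal{M}(\delta,D)$: triples $(X,x,\Gamma)$, $X$ proper geodesic $\delta$-hyperbolic, $\Gamma\le\mathrm{Isom}(X)$ discrete, torsion-free, non-elementary, quasiconvex-cocompact with codiameter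 $\le D$, $x\in\mathrm{QC\text{-}Hull}(\Lambda(\Gamma))$. Equivariant pointed Gromov–Hausdorff convergence: with $\Sigma_R(\Gamma,x)=\{g\in\Gamma:d(x,gx)\le R\}$, an equivariant $\varepsilon$-approximation between $(X,x,\Gamma)$ and $(Y,y,\Lambda)$ is $(f,\varphi,\psi)$ with $f:B(x,1/\varepsilon)\to B(y,1/\varepsilon)$, $f(x)=y$, $|d(f(a),f(b))-d(a,b)|<\varepsilon$, image $\varepsilon$-dense in $B(y,1/\varepsilon)$; $\varphi:\Sigma_{1/\varepsilon}(\Gamma,x)\to\Sigma_{1/\varepsilon}(\Lambda,y)$ with $d(f(ga),\varphi(g)f(a))<\varepsilon$ whenever $a,ga\in B(x,1/\varepsilon)$; $\psi:\Sigma_{1/\varepsilon}(\Lambda,y)\to\Sigma_{1/\varepsilon}(\Gamma,x)$ with $d(f(\psi(g)a),gf(a))<\varepsilon$ whenever $a,\psi(g)a\in B(x,1/\varepsilon)$. Convergence means that for every $\varepsilon>0$ such approximations exist for all large $n$. *)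

theory Defs
  imports "HOL-Analysis.Analysis" "HOL-Library.Extended_Nat"
begin

definition proper_space :: "'a metric \<Rightarrow> bool" where
  "proper_space X \<longleftrightarrow>
     (\<forall>x\<in>mspace X. \<forall>r. compactin (mtopology_of X) (mcball_of X x r))"

definition geodesic_space :: "'a metric \<Rightarrow> bool" where
  "geodesic_space X \<longleftrightarrow>
     (\<forall>a\<in>mspace X. \<forall>b\<in>mspace X. \<exists>\<gamma>::real \<Rightarrow> 'a.
        \<gamma> 0 = a \<and> \<gamma> (mdist X a b) = b \<and>
        (\<forall>t\<in>{0..mdist X a b}. \<gamma> t \<in> mspace X) \<and>
        (\<forall>s\<in>{0..mdist X a b}. \<forall>t\<in>{0..mdist X a b}. mdist X (\<gamma> s) (\<gamma> t) = \<bar>s - t\<bar>))"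

definition gromov_product :: "'a metric \<Rightarrow> 'a \<Rightarrow> 'a \<Rightarrow> 'a \<Rightarrow> real" where
  "gromov_product X y z x = (mdist X x y + mdist X x z - mdist X y z) / 2"

definition hyperbolic :: "'a metric \<Rightarrow> real \<Rightarrow> bool" where
  "hyperbolic X \<delta> \<longleftrightarrow>
     (\<forall>x\<in>mspace X. \<forall>y\<in>mspace X. \<forall>z\<in>mspace X. \<forall>w\<in>mspace X.
        gromov_product X x z w \<ge> min (gromov_product X x y w) (gromov_product X y z w) - \<delta>)"

text \<open>Isometries of X: distance-preserving bijections of the carrier, normalised to be the
  identity outside the carrier (so that they are determined by their action on X).\<close>
definition Isom :: "'a metric \<Rightarrow> ('a \<Rightarrow> 'a) set" where
  "Isom X = {g. bij_betw g (mspace X) (mspace X) \<and>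
                (\<forall>a\<in>mspace X. \<forall>b\<in>mspace X. mdist X (g a) (g b) = mdist X a b) \<and>
                (\<forall>a. a \<notin> mspace X \<longrightarrow> g a = a)}"

definition isom_subgroup :: "'a metric \<Rightarrow> ('a \<Rightarrow> 'a) set \<Rightarrow> bool" where
  "isom_subgroup X G \<longleftrightarrow> G \<subseteq> Isom X \<and> id \<in> G \<and>
     (\<forall>g\<in>G. \<forall>h\<in>G. g \<circ> h \<in> G) \<and> (\<forall>g\<in>G. inv g \<in> G)"

text \<open>Topology of Isom(X): compact-open topology, which for metric spaces is the topology of
  uniform convergence on compact sets. Basic neighbourhoods of f: {h. sup over K of d(h y, f y) < e}.\<close>
definition isom_nbhd :: "'a metric \<Rightarrow> ('a \<Rightarrow> 'a) \<Rightarrow> 'a set \<Rightarrow> real \<Rightarrow> ('a \<Rightarrow> 'a) set" where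
  "isom_nbhd X f K e = {h \<in> Isom X. \<exists>e'<e. \<forall>y\<in>K. mdist X (h y) (f y) \<le> e'}"

definition discrete_subgroup :: "'a metric \<Rightarrow> ('a \<Rightarrow> 'a) set \<Rightarrow> bool" where
  "discrete_subgroup X G \<longleftrightarrow>
     (\<forall>g\<in>G. \<exists>K e. K \<subseteq> mspace X \<and> compactin (mtopology_of X) K \<and> e > 0 \<and>
        G \<inter> isom_nbhd X g K e = {g})"

definition closed_subgroup :: "'a metric \<Rightarrow> ('a \<Rightarrow> 'a) set \<Rightarrow> bool" where
  "closed_subgroup X G \<longleftrightarrow>
     (\<forall>f\<in>Isom X. (\<forall>K e. K \<subseteq> mspace X \<and> compactin (mtopology_of X) K \<and> e > 0 \<longrightarrow>
         G \<inter> isom_nbhd X f K e \<noteq> {}) \<longrightarrow> f \<in> G)"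

definition torsion_free :: "('a \<Rightarrow> 'a) set \<Rightarrow> bool" where
  "torsion_free G \<longleftrightarrow> (\<forall>g\<in>G. \<forall>n::nat. n \<ge> 1 \<and> g ^^ n = id \<longrightarrow> g = id)"

definition gromov_seq :: "'a metric \<Rightarrow> (nat \<Rightarrow> 'a) \<Rightarrow> bool" where
  "gromov_seq X z \<longleftrightarrow> (\<forall>i. z i \<in> mspace X) \<and>
     (\<forall>w\<in>mspace X. \<forall>M::real. \<exists>N. \<forall>i\<ge>N. \<forall>j\<ge>N. gromov_product X (z i) (z j) w \<ge> M)"

definition gromov_equiv :: "'a metric \<Rightarrow> (nat \<Rightarrow> 'a) \<Rightarrow> (nat \<Rightarrow> 'a) \<Rightarrow> bool" where
  "gromov_equiv X z z' \<longleftrightarrow>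
     (\<forall>w\<in>mspace X. \<forall>M::real. \<exists>N. \<forall>i\<ge>N. \<forall>j\<ge>N. gromov_product X (z i) (z' j) w \<ge> M)"

definition gromov_boundary :: "'a metric \<Rightarrow> (nat \<Rightarrow> 'a) set set" where
  "gromov_boundary X =
     {{z'. gromov_seq X z' \<and> gromov_equiv X z z'} | z. gromov_seq X z}"

definition limit_set :: "'a metric \<Rightarrow> 'a \<Rightarrow> ('a \<Rightarrow> 'a) set \<Rightarrow> (nat \<Rightarrow> 'a) set set" where
  "limit_set X x G = {\<xi> \<in> gromov_boundary X. \<exists>g. (\<forall>i. g i \<in> G) \<and> (\<lambda>i. g i x) \<in> \<xi>}"

definition non_elementary :: "'a metric \<Rightarrow> 'a \<Rightarrow> ('a \<Rightarrow> 'a) set \<Rightarrow> bool" where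
  "non_elementary X x G \<longleftrightarrow> \<not> (finite (limit_set X x G) \<and> card (limit_set X x G) \<le> 2)"

definition geodesic_line :: "'a metric \<Rightarrow> (real \<Rightarrow> 'a) \<Rightarrow> bool" where
  "geodesic_line X \<gamma> \<longleftrightarrow> (\<forall>t. \<gamma> t \<in> mspace X) \<and>
     (\<forall>s t. mdist X (\<gamma> s) (\<gamma> t) = \<bar>s - t\<bar>)"

definition QC_Hull :: "'a metric \<Rightarrow> (nat \<Rightarrow> 'a) set set \<Rightarrow> 'a set" where
  "QC_Hull X C = (\<Union>{range \<gamma> | \<gamma>. geodesic_line X \<gamma> \<and>
       (\<exists>\<xi>\<in>C. (\<lambda>n. \<gamma> (real n)) \<in> \<xi>) \<and> (\<exists>\<eta>\<in>C. (\<lambda>n. \<gamma> (- real n)) \<in> \<eta>)})"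

definition qc_cocompact :: "'a metric \<Rightarrow> 'a \<Rightarrow> ('a \<Rightarrow> 'a) set \<Rightarrow> real \<Rightarrow> bool" where
  "qc_cocompact X x G D \<longleftrightarrow>
     (\<forall>y\<in>QC_Hull X (limit_set X x G). \<forall>y'\<in>QC_Hull X (limit_set X x G).
        \<exists>g\<in>G. mdist X (g y) y' \<le> D)"

definition in_M :: "real \<Rightarrow> real \<Rightarrow> 'a metric \<Rightarrow> 'a \<Rightarrow> ('a \<Rightarrow> 'a) set \<Rightarrow> bool" where
  "in_M \<delta> D X x G \<longleftrightarrow>
     proper_space X \<and> geodesic_space X \<and> hyperbolic X \<delta> \<and>
     isom_subgroup X G \<and> discrete_subgroup X G \<and> torsion_free G \<and>
     non_elementary X x G \<and> qc_cocompact X x G D \<and>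
     x \<in> QC_Hull X (limit_set X x G)"

definition Sigma_R :: "'a metric \<Rightarrow> ('a \<Rightarrow> 'a) set \<Rightarrow> 'a \<Rightarrow> real \<Rightarrow> ('a \<Rightarrow> 'a) set" where
  "Sigma_R X G x R = {g \<in> G. mdist X x (g x) \<le> R}"

definition equiv_approx ::
  "real \<Rightarrow> 'a metric \<Rightarrow> 'a \<Rightarrow> ('a \<Rightarrow> 'a) set \<Rightarrow> 'b metric \<Rightarrow> 'b \<Rightarrow> ('b \<Rightarrow> 'b) set \<Rightarrow>
   ('a \<Rightarrow> 'b) \<Rightarrow> (('a \<Rightarrow> 'a) \<Rightarrow> ('b \<Rightarrow> 'b)) \<Rightarrow> (('b \<Rightarrow> 'b) \<Rightarrow> ('a \<Rightarrow> 'a)) \<Rightarrow> bool" where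
  "equiv_approx \<epsilon> X x G Y y H f \<phi> \<psi> \<longleftrightarrow>
     f ` mball_of X x (1/\<epsilon>) \<subseteq> mball_of Y y (1/\<epsilon>) \<and> f x = y \<and>
     (\<forall>a\<in>mball_of X x (1/\<epsilon>). \<forall>b\<in>mball_of X x (1/\<epsilon>).
        \<bar>mdist Y (f a) (f b) - mdist X a b\<bar> < \<epsilon>) \<and>
     (\<forall>z\<in>mball_of Y y (1/\<epsilon>). \<exists>a\<in>mball_of X x (1/\<epsilon>). mdist Y (f a) z < \<epsilon>) \<and>
     \<phi> ` Sigma_R X G x (1/\<epsilon>) \<subseteq> Sigma_R Y H y (1/\<epsilon>) \<and>
     (\<forall>g\<in>Sigma_R X G x (1/\<epsilon>). \<forall>a\<in>mball_of X x (1/\<epsilon>).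
        g a \<in> mball_of X x (1/\<epsilon>) \<longrightarrow> mdist Y (f (g a)) (\<phi> g (f a)) < \<epsilon>) \<and>
     \<psi> ` Sigma_R Y H y (1/\<epsilon>) \<subseteq> Sigma_R X G x (1/\<epsilon>) \<and>
     (\<forall>g\<in>Sigma_R Y H y (1/\<epsilon>). \<forall>a\<in>mball_of X x (1/\<epsilon>).
        \<psi> g a \<in> mball_of X x (1/\<epsilon>) \<longrightarrow> mdist Y (f (\<psi> g a)) (g (f a)) < \<epsilon>)"

definition equiv_pGH_converges ::
  "(nat \<Rightarrow> 'a metric) \<Rightarrow> (nat \<Rightarrow> 'a) \<Rightarrow> (nat \<Rightarrow> ('a \<Rightarrow> 'a) set) \<Rightarrow>
   'b metric \<Rightarrow> 'b \<Rightarrow> ('b \<Rightarrow> 'b) set \<Rightarrow> bool" where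
  "equiv_pGH_converges X x G Y y H \<longleftrightarrow>
     (\<forall>\<epsilon>>0. \<exists>N. \<forall>n\<ge>N. \<exists>f \<phi> \<psi>. equiv_approx \<epsilon> (X n) (x n) (G n) Y y H f \<phi> \<psi>)"

definition Pack :: "'a metric \<Rightarrow> 'a set \<Rightarrow> real \<Rightarrow> enat" where
  "Pack X Z r = Sup {enat (card S) | S. finite S \<and> S \<subseteq> Z \<and>
       (\<forall>a\<in>S. \<forall>b\<in>S. a \<noteq> b \<longrightarrow> mdist X a b > 2 * r)}"

definition Pack_in :: "'a metric \<Rightarrow> 'a set \<Rightarrow> real \<Rightarrow> real \<Rightarrow> enat" where
  "Pack_in X Y R r = (SUP y\<in>Y. Pack X (mcball_of X y R \<inter> Y) r)"

end

theory Submission imports Defs begin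

lemma pack_bound:
  assumes "compactin (mtopology_of m) K" "e > 0"
  shows "\<exists>M::nat. \<forall>S. finite S \<and> S \<subseteq> K \<and> (\<forall>a\<in>S. \<forall>b\<in>S. a \<noteq> b \<longrightarrow> mdist m a b > e) \<longrightarrow> card S \<le> M"
proof -
  have "Metric_space.mtotally_bounded (mspace m) (mdist m) K"
    using assms(1) Metric_space.compactin_imp_mtotally_bounded[OF Metric_space_mspace_mdist]
    by (simp add: mtopology_of_def)
  then have TB: "\<forall>\<epsilon>>0. \<exists>C. finite C \<and> C \<subseteq> K \<and> K \<subseteq> (\<Union>c\<in>C. mball_of m c \<epsilon>)"
    unfolding Metric_space.mtotally_bounded_def[OF Metric_space_mspace_mdist] mball_of_def .
  have "e / 2 > 0" using assms(2) by simp
  define C where "C = (SOME C. finite C \<and> C \<subseteq> K \<and> K \<subseteq> (\<Union>c\<in>C. mball_of m c (e/2)))"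
  have "finite C \<and> C \<subseteq> K \<and> K \<subseteq> (\<Union>c\<in>C. mball_of m c (e/2))"
    unfolding C_def
    by (rule someI_ex[where P="\<lambda>C. finite C \<and> C \<subseteq> K \<and> K \<subseteq> (\<Union>c\<in>C. mball_of m c (e/2))"])
       (rule TB[rule_format, OF \<open>e / 2 > 0\<close>])
  then have C: "finite C" "C \<subseteq> K" "K \<subseteq> (\<Union>c\<in>C. mball_of m c (e/2))" by auto
  show ?thesis
  proof (intro exI allI impI)
    fix S assume S: "finite S \<and> S \<subseteq> K \<and> (\<forall>a\<in>S. \<forall>b\<in>S. a \<noteq> b \<longrightarrow> mdist m a b > e)"
    define h where "h a = (SOME c. c \<in> C \<and> a \<in> mball_of m c (e/2))" for a
    have h: "h a \<in> C \<and> a \<in> mball_of m (h a) (e/2)" if "a \<in> S" for a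
    proof -
      have aK: "a \<in> K" using S that by auto
      have "a \<in> (\<Union>c\<in>C. mball_of m c (e/2))" using C(3) aK by (rule subsetD)
      then have "\<exists>c. c \<in> C \<and> a \<in> mball_of m c (e/2)" by auto
      then show ?thesis unfolding h_def
        by (rule someI_ex[where P="\<lambda>c. c \<in> C \<and> a \<in> mball_of m c (e/2)"])
    qed
    have "inj_on h S"
    proof (rule inj_onI, rule ccontr)
      fix a b assume ab: "a \<in> S" "b \<in> S" "h a = h b" "a \<noteq> b"
      have "mdist m a b \<le> mdist m a (h a) + mdist m (h a) b"
        using h ab by (intro mdist_triangle) auto
      also have "\<dots> < e" using h[OF ab(1)] h[OF ab(2)] ab(3) by (simp add: mdist_commute)
      finally show False using S ab by force
    qed
    then have "card S = card (h ` S)" by (simp add: card_image)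
    also have "\<dots> \<le> card C" using h C by (intro card_mono) auto
    finally show "card S \<le> card C" .
  qed
qed


lemma mdist_self: "x \<in> mspace m \<Longrightarrow> mdist m x x = 0"
  by simp

lemma hull_sub: "QC_Hull X C \<subseteq> mspace X"
  unfolding QC_Hull_def geodesic_line_def by auto

lemma pack_in_le:
  assumes "\<And>y S. y \<in> Y \<Longrightarrow> finite S \<Longrightarrow> S \<subseteq> mcball_of m y R \<inter> Y \<Longrightarrow>
             (\<forall>a\<in>S. \<forall>b\<in>S. a \<noteq> b \<longrightarrow> mdist m a b > 2 * r) \<Longrightarrow> card S \<le> M"
  shows "Pack_in m Y R r \<le> enat M"
  unfolding Pack_in_def Pack_def
  by (rule SUP_least, rule Sup_least) (use assms in auto)

lemma cocompact_step:
  assumes G: "isom_subgroup m G" and cc: "qc_cocompact m x G D"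
    and Y: "Y = QC_Hull m (limit_set m x G)" and xY: "x \<in> Y"
    and y: "y \<in> Y" and S: "finite S" "S \<subseteq> mcball_of m y R \<inter> Y"
    and sep: "\<forall>a\<in>S. \<forall>b\<in>S. a \<noteq> b \<longrightarrow> mdist m a b > s"
  shows "\<exists>T. finite T \<and> T \<subseteq> mcball_of m x (R + D) \<and> card T = card S \<and>
             (\<forall>a\<in>T. \<forall>b\<in>T. a \<noteq> b \<longrightarrow> mdist m a b > s)"
proof -
  obtain g where g: "g \<in> G" "mdist m (g y) x \<le> D"
    using cc y xY Y unfolding qc_cocompact_def by blast
  have gI: "g \<in> Isom m" using G g unfolding isom_subgroup_def by blast
  have bij: "bij_betw g (mspace m) (mspace m)"
    and dist: "\<And>a b. a \<in> mspace m \<Longrightarrow> b \<in> mspace m \<Longrightarrow> mdist m (g a) (g b) = mdist m a b"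
    using gI unfolding Isom_def by auto
  have ym: "y \<in> mspace m" and xm: "x \<in> mspace m" using y xY Y hull_sub[of m "limit_set m x G"] by auto
  have Sm: "S \<subseteq> mspace m" using S by auto
  have inj: "inj_on g S" using bij Sm unfolding bij_betw_def by (meson inj_on_subset)
  have gm: "g a \<in> mspace m" if "a \<in> mspace m" for a using bij that unfolding bij_betw_def by auto
  show ?thesis
  proof (intro exI conjI)
    show "finite (g ` S)" using S by simp
    show "card (g ` S) = card S" using inj by (simp add: card_image)
    show "g ` S \<subseteq> mcball_of m x (R + D)"
    proof
      fix z assume "z \<in> g ` S"
      then obtain a where a: "a \<in> S" "z = g a" by auto
      have am: "a \<in> mspace m" using a Sm by auto
      have "mdist m x (g a) \<le> mdist m x (g y) + mdist m (g y) (g a)"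
        using xm gm am ym by (intro mdist_triangle) auto
      also have "\<dots> \<le> D + R" using g dist[OF ym am] a S by (auto simp: mdist_commute)
      finally show "z \<in> mcball_of m x (R + D)" using a xm gm am by simp
    qed
    show "\<forall>a\<in>g ` S. \<forall>b\<in>g ` S. a \<noteq> b \<longrightarrow> mdist m a b > s"
    proof (intro ballI impI)
      fix u v assume "u \<in> g ` S" "v \<in> g ` S" "u \<noteq> v"
      then obtain a b where ab: "a \<in> S" "b \<in> S" "u = g a" "v = g b" "a \<noteq> b" by blast
      then have "mdist m u v = mdist m a b" using dist Sm by blast
      then show "mdist m u v > s" using sep ab by simp
    qed
  qed
qed

lemma ea_img: "equiv_approx e X x G Y y H f p q \<Longrightarrow> f ` mball_of X x (1/e) \<subseteq> mball_of Y y (1/e)"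
  unfolding equiv_approx_def by (elim conjE)

lemma ea_pt: "equiv_approx e X x G Y y H f p q \<Longrightarrow> f x = y"
  unfolding equiv_approx_def by (elim conjE)

lemma ea_dist: "equiv_approx e X x G Y y H f p q \<Longrightarrow> \<forall>a\<in>mball_of X x (1/e). \<forall>b\<in>mball_of X x (1/e).
        \<bar>mdist Y (f a) (f b) - mdist X a b\<bar> < e"
  unfolding equiv_approx_def by (elim conjE)

theorem mainTheorem16:
  fixes \<delta> D :: real
    and X :: "nat \<Rightarrow> 'a metric" and x :: "nat \<Rightarrow> 'a" and \<Gamma> :: "nat \<Rightarrow> ('a \<Rightarrow> 'a) set"
    and Xinf :: "'b metric" and xinf :: 'b and \<Gamma>inf :: "('b \<Rightarrow> 'b) set"
  assumes "\<delta> \<ge> 0" and "D \<ge> 0"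
    and "\<And>n. in_M \<delta> D (X n) (x n) (\<Gamma> n)"
    and "equiv_pGH_converges X x \<Gamma> Xinf xinf \<Gamma>inf"
    and "proper_space Xinf"
    and "isom_subgroup Xinf \<Gamma>inf"
    and "closed_subgroup Xinf \<Gamma>inf"
  shows "\<forall>r R. 0 < r \<and> r \<le> R \<longrightarrow>
           (SUP n. Pack_in (X n) (QC_Hull (X n) (limit_set (X n) (x n) (\<Gamma> n))) R r) < \<infinity>"
proof (intro allI impI)
  fix r R :: real assume rR: "0 < r \<and> r \<le> R"
  define Y where "Y n = QC_Hull (X n) (limit_set (X n) (x n) (\<Gamma> n))" for n
  have inM: "\<And>n. in_M \<delta> D (X n) (x n) (\<Gamma> n)" by fact
  have xY: "x n \<in> Y n" for n using inM[of n] unfolding in_M_def Y_def by auto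
  have xm: "x n \<in> mspace (X n)" for n using xY[of n] hull_sub[of "X n" "limit_set (X n) (x n) (\<Gamma> n)"] unfolding Y_def by blast
  define P where "P n M \<longleftrightarrow> (\<forall>T. finite T \<and> T \<subseteq> mcball_of (X n) (x n) (R + D) \<and>
       (\<forall>a\<in>T. \<forall>b\<in>T. a \<noteq> b \<longrightarrow> mdist (X n) a b > 2 * r) \<longrightarrow> card T \<le> M)" for n M
  have red: "Pack_in (X n) (Y n) R r \<le> enat M" if "P n M" for n M
  proof (rule pack_in_le)
    fix y S assume "y \<in> Y n" "finite S" "S \<subseteq> mcball_of (X n) y R \<inter> Y n"
      "\<forall>a\<in>S. \<forall>b\<in>S. a \<noteq> b \<longrightarrow> mdist (X n) a b > 2 * r"
    then obtain T where "finite T \<and> T \<subseteq> mcball_of (X n) (x n) (R + D) \<and> card T = card S \<and>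
             (\<forall>a\<in>T. \<forall>b\<in>T. a \<noteq> b \<longrightarrow> mdist (X n) a b > 2 * r)"
      using cocompact_step[of "X n" "\<Gamma> n" "x n" D "Y n" y S R "2*r"] inM[of n] xY[of n]
      unfolding in_M_def Y_def by blast
    then show "card S \<le> M" using that unfolding P_def by metis
  qed
  have each: "\<exists>M. P n M" for n
  proof -
    have "compactin (mtopology_of (X n)) (mcball_of (X n) (x n) (R + D))"
      using inM[of n] xm[of n] unfolding in_M_def proper_space_def by blast
    from pack_bound[OF this, of "2*r"] rR show ?thesis unfolding P_def by auto
  qed
  define \<epsilon> where "\<epsilon> = min r (1 / (R + D + 1))"
  have RD: "R + D + 1 > 0" using rR \<open>D \<ge> 0\<close> by linarith
  have eps: "\<epsilon> > 0" "\<epsilon> \<le> r" using rR RD unfolding \<epsilon>_def by auto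
  have inv: "1 / \<epsilon> \<ge> R + D + 1"
  proof -
    have "\<epsilon> \<le> 1 / (R + D + 1)" unfolding \<epsilon>_def by simp
    then have "1 / (1 / (R + D + 1)) \<le> 1 / \<epsilon>" using eps(1) RD
      by (intro divide_left_mono) auto
    then show ?thesis using RD by simp
  qed
  obtain N where N: "\<forall>n\<ge>N. \<exists>f \<phi> \<psi>. equiv_approx \<epsilon> (X n) (x n) (\<Gamma> n) Xinf xinf \<Gamma>inf f \<phi> \<psi>"
    using assms(4) eps(1) unfolding equiv_pGH_converges_def by blast
  have xinfm: "xinf \<in> mspace Xinf"
  proof -
    obtain f \<phi> \<psi> where E: "equiv_approx \<epsilon> (X N) (x N) (\<Gamma> N) Xinf xinf \<Gamma>inf f \<phi> \<psi>" using N by blast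
    have "f ` mball_of (X N) (x N) (1/\<epsilon>) \<subseteq> mball_of Xinf xinf (1/\<epsilon>)" "f (x N) = xinf"
      using ea_img[OF E] ea_pt[OF E] by auto
    moreover have "mdist (X N) (x N) (x N) = 0" using xm[of N] by simp
    then have "x N \<in> mball_of (X N) (x N) (1/\<epsilon>)" using xm[of N] eps by (simp del: mdist_zero)
    ultimately show ?thesis by (metis image_subset_iff in_mball_of)
  qed
  have "compactin (mtopology_of Xinf) (mcball_of Xinf xinf (1/\<epsilon>))"
    using assms(5) xinfm unfolding proper_space_def by blast
  from pack_bound[OF this, of r] rR obtain Minf where Minf:
    "\<forall>S. finite S \<and> S \<subseteq> mcball_of Xinf xinf (1/\<epsilon>) \<and> (\<forall>a\<in>S. \<forall>b\<in>S. a \<noteq> b \<longrightarrow> mdist Xinf a b > r)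
       \<longrightarrow> card S \<le> Minf" by auto
  have late: "P n Minf" if "n \<ge> N" for n
    unfolding P_def
  proof (intro allI impI)
    fix T assume T: "finite T \<and> T \<subseteq> mcball_of (X n) (x n) (R + D) \<and>
       (\<forall>a\<in>T. \<forall>b\<in>T. a \<noteq> b \<longrightarrow> mdist (X n) a b > 2 * r)"
    obtain f \<phi> \<psi> where E: "equiv_approx \<epsilon> (X n) (x n) (\<Gamma> n) Xinf xinf \<Gamma>inf f \<phi> \<psi>" using N \<open>n \<ge> N\<close> by blast
    have fB: "f ` mball_of (X n) (x n) (1/\<epsilon>) \<subseteq> mball_of Xinf xinf (1/\<epsilon>)"
      and fd: "\<forall>a\<in>mball_of (X n) (x n) (1/\<epsilon>). \<forall>b\<in>mball_of (X n) (x n) (1/\<epsilon>).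
        \<bar>mdist Xinf (f a) (f b) - mdist (X n) a b\<bar> < \<epsilon>"
      using ea_img[OF E] ea_dist[OF E] by auto
    have TB: "T \<subseteq> mball_of (X n) (x n) (1/\<epsilon>)" using T inv by auto
    have sep: "mdist Xinf (f a) (f b) > r" if "a \<in> T" "b \<in> T" "a \<noteq> b" for a b
    proof -
      have "\<bar>mdist Xinf (f a) (f b) - mdist (X n) a b\<bar> < \<epsilon>" using fd TB that by blast
      moreover have "mdist (X n) a b > 2 * r" using T that by blast
      ultimately show ?thesis using eps by linarith
    qed
    have inj: "inj_on f T"
    proof (rule inj_onI, rule ccontr)
      fix a b assume "a \<in> T" "b \<in> T" "f a = f b" "a \<noteq> b"
      moreover have "f b \<in> mspace Xinf" using fB TB \<open>b \<in> T\<close> by (metis image_subset_iff in_mball_of subsetD)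
      ultimately show False using sep[of a b] rR by (auto simp add: mdist_self)
    qed
    have "card T = card (f ` T)" using inj by (simp add: card_image)
    also have "\<dots> \<le> Minf"
    proof -
      have "f ` T \<subseteq> mcball_of Xinf xinf (1/\<epsilon>)"
      proof
        fix z assume "z \<in> f ` T"
        then have "z \<in> mball_of Xinf xinf (1/\<epsilon>)" using fB TB by blast
        then show "z \<in> mcball_of Xinf xinf (1/\<epsilon>)" by simp
      qed
      moreover have "\<forall>u\<in>f ` T. \<forall>v\<in>f ` T. u \<noteq> v \<longrightarrow> mdist Xinf u v > r"
      proof (intro ballI impI)
        fix u v assume "u \<in> f ` T" "v \<in> f ` T" "u \<noteq> v"
        then obtain a b where "a \<in> T" "b \<in> T" "u = f a" "v = f b" "a \<noteq> b" by blast
        then show "mdist Xinf u v > r" using sep by blast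
      qed
      moreover have "finite (f ` T)" using T by (intro finite_imageI) (elim conjE)
      ultimately have C: "finite (f ` T) \<and> f ` T \<subseteq> mcball_of Xinf xinf (1/\<epsilon>) \<and>
          (\<forall>u\<in>f ` T. \<forall>v\<in>f ` T. u \<noteq> v \<longrightarrow> mdist Xinf u v > r)" by (intro conjI)
      show ?thesis by (rule Minf[rule_format, OF C])
    qed
    finally show "card T \<le> Minf" .
  qed
  have "\<forall>n. \<exists>M. P n M" using each by blast
  then obtain Mf where Mf: "\<forall>n. P n (Mf n)" using choice[of P] by blast
  define B where "B = Minf + (\<Sum>n<N. Mf n)"
  have mono: "P n M \<Longrightarrow> M \<le> M' \<Longrightarrow> P n M'" for n M M' unfolding P_def by (meson order_trans)
  have allB: "P n B" for n
  proof (cases "n \<ge> N")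
    case True
    show ?thesis by (rule mono[OF late[OF True]]) (simp add: B_def)
  next
    case False
    then have "Mf n \<le> (\<Sum>n<N. Mf n)" by (intro member_le_sum) auto
    then have "Mf n \<le> B" unfolding B_def by linarith
    then show ?thesis using Mf mono by blast
  qed
  have "(SUP n. Pack_in (X n) (Y n) R r) \<le> enat B"
    by (rule SUP_least) (rule red[OF allB])
  then show "(SUP n. Pack_in (X n) (QC_Hull (X n) (limit_set (X n) (x n) (\<Gamma> n))) R r) < \<infinity>"
    unfolding Y_def by (rule le_less_trans) simp
qed

end
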